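(* The topological Markov shift $(\Omega,\sigma)$ is topologically mixing and has the BIP property.
   Context: For $n\ge1$ let $\mathcal A_n=\{(\mathbf1,k)_n:1\le k\le n+1\}\cup\{(\mathbf2,1)_n\}\cup\{(\mathbf3,k)_n:1\le k\le n\}$; for $e=(\mathbf t,k)_n$ its type is $\mathbf t_e=\mathbf t$. For $\mathbf t\in\{\mathbf1,\mathbf2,\mathbf3\}$ and $\hat e\in\mathcal A_n$, $\mathbf t\to\hat e$ iff $(\mathbf t,\hat e)$ is $(\mathbf1,(\mathbf2,1)_n)$, $(\mathbf2,(\mathbf1,k)_n)$ with $k\le n+1$, $(\mathbf2,(\mathbf3,k)_n)$ with $k\le n$, $(\mathbf3,(\mathbf1,k)_n)$ with $k\le n$, or $(\mathbf3,(\mathbf3,k)_n)$ with $k\le n-1$; for $e,\hat e$ in the alphabets, $e\to\hat e$ iff $\mathbf t_e\to\hat e$. $\mathcal A=\bigsqcup_{n\ge1}\mathcal A_n$ (countable alphabet); $\Omega=\{x_1x_2\cdots\in\mathcal A^{\mathbb N}:x_j\to x_{j+1}\ \forall j\}$ with metric $2^{-|x\wedge y|}$ and left shift $\sigma$. Topologically mixing: for all $e,\hat e\in\mathcal A$ there is $N$ such that for all $n\ge N$ there is an admissible word of length $n$ from $e$ to $\hat e$. BIP: there is a finite $\mathcal S\subset\mathcal A$ such that for every $e\in\mathcal A$ there are $s_1,s_2\in\mathcal S$ with $s_1\to e\to s_2$. *)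

theory Defs
  imports Main
begin

datatype ty = T1 | T2 | T3

text \<open>A letter (t,k,n) stands for (t,k)_n.\<close>
type_synonym letter = "ty \<times> nat \<times> nat"

definition alph_n :: "nat \<Rightarrow> letter set" where
  "alph_n n = {(T1,k,n) | k. 1 \<le> k \<and> k \<le> n + 1} \<union> {(T2,1,n)}
              \<union> {(T3,k,n) | k. 1 \<le> k \<and> k \<le> n}"

definition alph :: "letter set" where
  "alph = (\<Union>n\<in>{1..}. alph_n n)"

definition tyof :: "letter \<Rightarrow> ty" where
  "tyof e = fst e"

definition ty_to :: "ty \<Rightarrow> letter \<Rightarrow> bool" where
  "ty_to t f \<longleftrightarrow> f \<in> alph \<and>
     (case f of (u, k, n) \<Rightarrow>
        (t = T1 \<and> u = T2 \<and> k = 1)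
      \<or> (t = T2 \<and> u = T1 \<and> k \<le> n + 1)
      \<or> (t = T2 \<and> u = T3 \<and> k \<le> n)
      \<or> (t = T3 \<and> u = T1 \<and> k \<le> n)
      \<or> (t = T3 \<and> u = T3 \<and> k \<le> n - 1))"

definition arrow :: "letter \<Rightarrow> letter \<Rightarrow> bool" where
  "arrow e f \<longleftrightarrow> e \<in> alph \<and> f \<in> alph \<and> ty_to (tyof e) f"

definition Omega :: "(nat \<Rightarrow> letter) set" where
  "Omega = {x. (\<forall>j. x j \<in> alph) \<and> (\<forall>j. arrow (x j) (x (Suc j)))}"

definition shift :: "(nat \<Rightarrow> letter) \<Rightarrow> (nat \<Rightarrow> letter)" where
  "shift x = (\<lambda>j. x (Suc j))"

definition adm_word :: "('a \<Rightarrow> 'a \<Rightarrow> bool) \<Rightarrow> 'a set \<Rightarrow> nat \<Rightarrow> 'a \<Rightarrow> 'a \<Rightarrow> 'a list \<Rightarrow> bool" where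
  "adm_word T A n e f w \<longleftrightarrow> length w = n \<and> n \<ge> 1 \<and> set w \<subseteq> A \<and>
     w ! 0 = e \<and> w ! (n - 1) = f \<and> (\<forall>j. j + 1 < n \<longrightarrow> T (w ! j) (w ! (j + 1)))"

definition topologically_mixing :: "('a \<Rightarrow> 'a \<Rightarrow> bool) \<Rightarrow> 'a set \<Rightarrow> bool" where
  "topologically_mixing T A \<longleftrightarrow>
     (\<forall>e\<in>A. \<forall>f\<in>A. \<exists>N. \<forall>n\<ge>N. \<exists>w. adm_word T A n e f w)"

definition BIP :: "('a \<Rightarrow> 'a \<Rightarrow> bool) \<Rightarrow> 'a set \<Rightarrow> bool" where
  "BIP T A \<longleftrightarrow> (\<exists>S. finite S \<and> S \<subseteq> A \<and>
     (\<forall>e\<in>A. \<exists>s1\<in>S. \<exists>s2\<in>S. T s1 e \<and> T e s2))"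

end

theory Submission
  imports Defs
begin

definition P :: "nat \<Rightarrow> letter \<Rightarrow> letter \<Rightarrow> bool" where
  "P n e f \<longleftrightarrow> (\<exists>w. adm_word arrow alph n e f w)"

lemma P_one: "e \<in> alph \<Longrightarrow> P 1 e e"
  unfolding P_def adm_word_def by (rule exI[of _ "[e]"]) auto

lemma P_snoc: assumes "P n e f" "arrow f g" shows "P (Suc n) e g"
proof -
  obtain w where w: "adm_word arrow alph n e f w" using assms(1) P_def by auto
  have g: "g \<in> alph" using assms(2) arrow_def by auto
  have "adm_word arrow alph (Suc n) e g (w @ [g])"
    unfolding adm_word_def
  proof (intro conjI allI impI)
    show "\<And>j. j + 1 < Suc n \<Longrightarrow> arrow ((w @ [g]) ! j) ((w @ [g]) ! (j + 1))"
    proof -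
      fix j assume j: "j + 1 < Suc n"
      show "arrow ((w @ [g]) ! j) ((w @ [g]) ! (j + 1))"
      proof (cases "j + 1 < n")
        case True thus ?thesis using w unfolding adm_word_def by (auto simp: nth_append)
      next
        case False
        hence "j = n - 1" "n \<ge> 1" using j w unfolding adm_word_def by auto
        thus ?thesis using w assms(2) unfolding adm_word_def by (auto simp: nth_append)
      qed
    qed
  qed (use w g in \<open>auto simp: adm_word_def nth_append\<close>)
  thus ?thesis using P_def by auto
qed

abbreviation "la \<equiv> (T1, 1::nat, 1::nat)"
abbreviation "lb \<equiv> (T2, 1::nat, 1::nat)"
abbreviation "lc \<equiv> (T3, 1::nat, 2::nat)"

lemma mem_alph: "n \<ge> 1 \<Longrightarrow> e \<in> alph_n n \<Longrightarrow> e \<in> alph"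
  unfolding alph_def by auto

lemma la_in: "la \<in> alph" by (rule mem_alph[of 1]) (auto simp: alph_n_def)
lemma lb_in: "lb \<in> alph" by (rule mem_alph[of 1]) (auto simp: alph_n_def)
lemma lc_in: "lc \<in> alph" by (rule mem_alph[of 2]) (auto simp: alph_n_def)

lemma alph_cases:
  assumes "e \<in> alph"
  obtains n k where "n \<ge> 1" "e = (T1,k,n)" "1 \<le> k" "k \<le> n + 1"
  | n where "n \<ge> 1" "e = (T2,1,n)"
  | n k where "n \<ge> 1" "e = (T3,k,n)" "1 \<le> k" "k \<le> n"
  using assms unfolding alph_def alph_n_def by auto

lemma ab: "arrow la lb" using la_in lb_in by (auto simp: arrow_def ty_to_def tyof_def)
lemma ba: "arrow lb la" using la_in lb_in by (auto simp: arrow_def ty_to_def tyof_def)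
lemma bc: "arrow lb lc" using lc_in lb_in by (auto simp: arrow_def ty_to_def tyof_def)
lemma cc: "arrow lc lc" using lc_in by (auto simp: arrow_def ty_to_def tyof_def)
lemma ca: "arrow lc la" using lc_in la_in by (auto simp: arrow_def ty_to_def tyof_def)

lemma P_c: "P n e lc \<Longrightarrow> P (n + j) e lc"
  proof (induction j)
  case (Suc j) thus ?case using P_snoc[OF _ cc] by (metis add_Suc_right)
qed simp

lemma P_loop: assumes "P n e lb" "k \<ge> 3" shows "P (n + k) e lb"
proof -
  have "P (Suc n) e lc" using assms(1) bc P_snoc by blast
  hence "P (Suc n + (k - 3)) e lc" by (rule P_c)
  hence "P (Suc (Suc n + (k - 3))) e la" using ca P_snoc by blast
  hence "P (Suc (Suc (Suc n + (k - 3)))) e lb" using ab P_snoc by blast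
  moreover have "Suc (Suc (Suc n + (k - 3))) = n + k" using assms(2) by simp
  ultimately show ?thesis by metis
qed

lemma out_b: assumes "e \<in> alph" shows "\<exists>p\<in>{2,3}. P p e lb"
  using assms
proof (cases rule: alph_cases)
  case 1
  have "arrow e lb" using assms lb_in 1 by (auto simp: arrow_def ty_to_def tyof_def)
  thus ?thesis using P_snoc[OF P_one[OF assms]] by (metis insertI1 numeral_2_eq_2 One_nat_def)
next
  case 2
  have "arrow e la" using assms la_in 2 by (auto simp: arrow_def ty_to_def tyof_def)
  hence "P 2 e la" using P_snoc[OF P_one[OF assms]] by (simp add: numeral_2_eq_2)
  hence "P 3 e lb" using P_snoc ab by (metis numeral_3_eq_3 numeral_2_eq_2)
  thus ?thesis by auto
next
  case 3
  have "arrow e la" using assms la_in 3 by (auto simp: arrow_def ty_to_def tyof_def)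
  hence "P 2 e la" using P_snoc[OF P_one[OF assms]] by (simp add: numeral_2_eq_2)
  hence "P 3 e lb" using P_snoc ab by (metis numeral_3_eq_3 numeral_2_eq_2)
  thus ?thesis by auto
qed

lemma into_f: assumes "f \<in> alph" shows "\<exists>q\<in>{1,2}. \<forall>n e. P n e lb \<longrightarrow> P (n + q) e f"
  using assms
proof (cases rule: alph_cases)
  case 1
  have "arrow lb f" using assms lb_in 1 by (auto simp: arrow_def ty_to_def tyof_def)
  thus ?thesis using P_snoc by auto
next
  case 2
  have "arrow la f" using assms la_in 2 by (auto simp: arrow_def ty_to_def tyof_def)
  hence "\<forall>n e. P n e lb \<longrightarrow> P (n + 2) e f" using P_snoc ba by (metis add_2_eq_Suc')
  thus ?thesis by auto
next
  case 3
  have "arrow lb f" using assms lb_in 3 by (auto simp: arrow_def ty_to_def tyof_def)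
  thus ?thesis using P_snoc by auto
qed

lemma mixing: "topologically_mixing arrow alph"
  unfolding topologically_mixing_def
proof (intro ballI)
  fix e f assume e: "e \<in> alph" and f: "f \<in> alph"
  obtain p where p: "p \<in> {2,3}" "P p e lb" using out_b[OF e] by blast
  obtain q where q: "q \<in> {1,2}" "\<forall>n e. P n e lb \<longrightarrow> P (n + q) e f" using into_f[OF f] by blast
  show "\<exists>N. \<forall>n\<ge>N. \<exists>w. adm_word arrow alph n e f w"
  proof (rule exI[of _ 8], intro allI impI)
    fix n :: nat assume n: "8 \<le> n"
    have "P (p + (n - p - q)) e lb" using p q n by (intro P_loop) auto
    hence "P (p + (n - p - q) + q) e f" using q by blast
    moreover have "p + (n - p - q) + q = n" using p q n by auto
    ultimately show "\<exists>w. adm_word arrow alph n e f w" using P_def by auto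
  qed
qed

lemma bip: "BIP arrow alph"
  unfolding BIP_def
proof (intro exI[of _ "{la, lb}"] conjI ballI)
  show "{la, lb} \<subseteq> alph" using la_in lb_in by auto
  fix e assume e: "e \<in> alph"
  show "\<exists>s1\<in>{la, lb}. \<exists>s2\<in>{la, lb}. arrow s1 e \<and> arrow e s2"
    using e
  proof (cases rule: alph_cases)
    case 1 thus ?thesis using e la_in lb_in by (auto simp: arrow_def ty_to_def tyof_def)
  next
    case 2 thus ?thesis using e la_in lb_in by (auto simp: arrow_def ty_to_def tyof_def)
  next
    case 3 thus ?thesis using e la_in lb_in by (auto simp: arrow_def ty_to_def tyof_def)
  qed
qed simp

theorem proposition4p1:
  shows "topologically_mixing arrow alph \<and> BIP arrow alph"
  using mixing bip by simp

end
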